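(* Let $U=\{\xi_1,\dots,\xi_p\}\subset\mathbb{R}^k$ be finite, for $j\in\Lambda=\{1,\dots,m\}$ let $f_j:\mathbb{R}^n\times U\to\mathbb{R}$ with $x\mapsto f_j(x,\xi_i)$ continuously differentiable for each $i\in\bar\Lambda=\{1,\dots,p\}$, and let $\Phi=(\Phi_1,\dots,\Phi_m)$ with $\Phi_j(x)=\max_{i\in\bar\Lambda}f_j(x,\xi_i)$. (i) Let $\{x^k\}$ be any infinite sequence of non-critical points in $\mathbb{R}^n$ such that $\Phi(x^{k+1})\le\Phi(x^k)$ (componentwise) for all $k$. If $x^*$ is any accumulation point of $\{x^k\}$, then $\Phi(x^* )\le\Phi(x^k)$ for all $k$ and $\lim_{k\to\infty}\Phi(x^k)=\Phi(x^* )$. Moreover, $\Phi$ is constant on the set of accumulation points of $\{x^k\}$. (ii) If $\{x^k\}$ is generated by Algorithm 1 (described in the context) and has an accumulation point, then all conclusions of (i) hold for this sequence.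
   Context: For vectors, $u\le v$ means componentwise. For $x\in\mathbb{R}^n$, $I_j(x)=\{i\in\bar\Lambda:f_j(x,\xi_i)=\Phi_j(x)\}$; $x^*$ is a critical point for $\Phi$ if there is no $v\in\mathbb{R}^n$ with $\nabla f_j(x^*,\xi_i)^Tv<0$ for all $j\in\Lambda$, $i\in I_j(x^* )$; otherwise it is non-critical. For $x\in\mathbb{R}^n$, let $\vartheta_x(t)=\max_{j\in\Lambda}\max_{i\in\bar\Lambda}\{f_j(x,\xi_i)+\nabla f_j(x,\xi_i)^Tt-\Phi_j(x)\}$, let $t(x)$ be the unique minimizer over $t$ of $\vartheta_x(t)+\frac12\|t\|^2$, and $\Theta(x)$ its optimal value. Algorithm 1: choose $\epsilon>0$, $\beta\in(0,1)$, $x^0\in\mathbb{R}^n$, set $k=0$. Step 2: compute $t^k=t(x^k)$ and $\Theta(x^k)$. Step 3: if $|\Theta(x^k)|<\epsilon$, stop. Step 4: let $\alpha_k$ be the largest $\alpha\in\{1/2^r:r=1,2,\dots\}$ such that for all $j$, $\Phi_j(x^k+\alpha t^k)\le\Phi_j(x^k)+\alpha\beta\big(\max_{i\in\bar\Lambda}\{f_j(x^k,\xi_i)+\nabla f_j(x^k,\xi_i)^Tt^k\}-\Phi_j(x^k)\big)$. Step 5: set $x^{k+1}=x^k+\alpha_kt^k$, $k:=k+1$, go to Step 2. *)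

theory Defs
  imports "HOL-Analysis.Analysis"
begin

text \<open>Objective index set Lambda = {1..m}, scenario index set Lambda-bar = {1..p}.
  f j x u stands for f_j(x,u); xi i is the i-th scenario; g j i x is the gradient
  of x |-> f_j(x, xi_i) at x.\<close>

definition Phi :: "(nat \<Rightarrow> 'x \<Rightarrow> 'u \<Rightarrow> real) \<Rightarrow> (nat \<Rightarrow> 'u) \<Rightarrow> nat \<Rightarrow> nat \<Rightarrow> 'x \<Rightarrow> real" where
  "Phi f xi p j x = (MAX i\<in>{1..p}. f j x (xi i))"

definition active_set :: "(nat \<Rightarrow> 'x \<Rightarrow> 'u \<Rightarrow> real) \<Rightarrow> (nat \<Rightarrow> 'u) \<Rightarrow> nat \<Rightarrow> nat \<Rightarrow> 'x \<Rightarrow> nat set" where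
  "active_set f xi p j x = {i \<in> {1..p}. f j x (xi i) = Phi f xi p j x}"

definition critical :: "(nat \<Rightarrow> 'x \<Rightarrow> 'u \<Rightarrow> real) \<Rightarrow> (nat \<Rightarrow> nat \<Rightarrow> 'x \<Rightarrow> 'x::real_inner)
    \<Rightarrow> (nat \<Rightarrow> 'u) \<Rightarrow> nat \<Rightarrow> nat \<Rightarrow> 'x \<Rightarrow> bool" where
  "critical f g xi m p x \<longleftrightarrow>
     \<not> (\<exists>v. \<forall>j\<in>{1..m}. \<forall>i\<in>active_set f xi p j x. g j i x \<bullet> v < 0)"

definition theta_fun :: "(nat \<Rightarrow> 'x \<Rightarrow> 'u \<Rightarrow> real) \<Rightarrow> (nat \<Rightarrow> nat \<Rightarrow> 'x \<Rightarrow> 'x::real_inner)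
    \<Rightarrow> (nat \<Rightarrow> 'u) \<Rightarrow> nat \<Rightarrow> nat \<Rightarrow> 'x \<Rightarrow> 'x \<Rightarrow> real" where
  "theta_fun f g xi m p x t =
     (MAX j\<in>{1..m}. MAX i\<in>{1..p}. f j x (xi i) + g j i x \<bullet> t - Phi f xi p j x)"

definition tdir :: "(nat \<Rightarrow> 'x \<Rightarrow> 'u \<Rightarrow> real) \<Rightarrow> (nat \<Rightarrow> nat \<Rightarrow> 'x \<Rightarrow> 'x::real_inner)
    \<Rightarrow> (nat \<Rightarrow> 'u) \<Rightarrow> nat \<Rightarrow> nat \<Rightarrow> 'x \<Rightarrow> 'x" where
  "tdir f g xi m p x = (THE t. \<forall>s.
      theta_fun f g xi m p x t + (norm t)\<^sup>2 / 2 \<le> theta_fun f g xi m p x s + (norm s)\<^sup>2 / 2)"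

definition Theta :: "(nat \<Rightarrow> 'x \<Rightarrow> 'u \<Rightarrow> real) \<Rightarrow> (nat \<Rightarrow> nat \<Rightarrow> 'x \<Rightarrow> 'x::real_inner)
    \<Rightarrow> (nat \<Rightarrow> 'u) \<Rightarrow> nat \<Rightarrow> nat \<Rightarrow> 'x \<Rightarrow> real" where
  "Theta f g xi m p x =
     theta_fun f g xi m p x (tdir f g xi m p x) + (norm (tdir f g xi m p x))\<^sup>2 / 2"

definition armijo :: "(nat \<Rightarrow> 'x \<Rightarrow> 'u \<Rightarrow> real) \<Rightarrow> (nat \<Rightarrow> nat \<Rightarrow> 'x \<Rightarrow> 'x::real_inner)
    \<Rightarrow> (nat \<Rightarrow> 'u) \<Rightarrow> nat \<Rightarrow> nat \<Rightarrow> real \<Rightarrow> 'x \<Rightarrow> 'x \<Rightarrow> real \<Rightarrow> bool" where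
  "armijo f g xi m p \<beta> x t a \<longleftrightarrow>
     (\<forall>j\<in>{1..m}. Phi f xi p j (x + a *\<^sub>R t) \<le>
        Phi f xi p j x + a * \<beta> * ((MAX i\<in>{1..p}. f j x (xi i) + g j i x \<bullet> t) - Phi f xi p j x))"

text \<open>A sequence generated by Algorithm 1 that never stops (infinite sequence).\<close>
definition alg1_seq :: "(nat \<Rightarrow> 'x \<Rightarrow> 'u \<Rightarrow> real) \<Rightarrow> (nat \<Rightarrow> nat \<Rightarrow> 'x \<Rightarrow> 'x::real_inner)
    \<Rightarrow> (nat \<Rightarrow> 'u) \<Rightarrow> nat \<Rightarrow> nat \<Rightarrow> real \<Rightarrow> real \<Rightarrow> (nat \<Rightarrow> 'x) \<Rightarrow> bool" where
  "alg1_seq f g xi m p \<epsilon> \<beta> X \<longleftrightarrow>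
     (\<forall>k. \<not> (\<bar>Theta f g xi m p (X k)\<bar> < \<epsilon>) \<and>
        (\<exists>a. (\<exists>r::nat. r \<ge> 1 \<and> a = 1 / 2 ^ r) \<and>
             armijo f g xi m p \<beta> (X k) (tdir f g xi m p (X k)) a \<and>
             (\<forall>r::nat. r \<ge> 1 \<longrightarrow> armijo f g xi m p \<beta> (X k) (tdir f g xi m p (X k)) (1 / 2 ^ r)
                 \<longrightarrow> 1 / 2 ^ r \<le> a) \<and>
             X (Suc k) = X k + a *\<^sub>R tdir f g xi m p (X k)))"

definition acc_point :: "(nat \<Rightarrow> 'x::topological_space) \<Rightarrow> 'x \<Rightarrow> bool" where
  "acc_point X a \<longleftrightarrow> (\<exists>r. strict_mono r \<and> (X \<circ> r) \<longlonglongrightarrow> a)"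

end

theory Submission
  imports Defs
begin

lemma le_MAX: "finite I \<Longrightarrow> i \<in> I \<Longrightarrow> h i \<le> (MAX i\<in>I. h i)"
  for h :: "nat \<Rightarrow> real" by (simp add: Max_ge)

lemma MAX_le: "finite I \<Longrightarrow> I \<noteq> {} \<Longrightarrow> (\<And>i. i \<in> I \<Longrightarrow> h i \<le> c) \<Longrightarrow> (MAX i\<in>I. h i) \<le> c"
  for h :: "nat \<Rightarrow> real" by (simp add: Max_le_iff)

lemma continuous_MAX:
  fixes h :: "nat \<Rightarrow> 'a::t2_space \<Rightarrow> real"
  assumes "finite I" "I \<noteq> {}" "\<And>i. i \<in> I \<Longrightarrow> continuous F (h i)"
  shows "continuous F (\<lambda>x. MAX i\<in>I. h i x)"
  using assms
proof (induction I rule: finite_ne_induct)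
  case (singleton x)
  then show ?case by simp
next
  case (insert a A)
  have e: "(\<lambda>x. MAX i\<in>insert a A. h i x) = (\<lambda>x. max (h a x) (MAX i\<in>A. h i x))"
    using insert by (simp add: Max_insert)
  show ?case unfolding e using insert by (intro continuous_max) auto
qed

lemma decr_sub:
  fixes s :: "nat \<Rightarrow> real"
  assumes dec: "\<And>k. s (Suc k) \<le> s k" and r: "strict_mono r" and lim: "(s \<circ> r) \<longlonglongrightarrow> L"
  shows "(\<forall>k. L \<le> s k) \<and> s \<longlonglongrightarrow> L"
proof -
  have d: "decseq s" using dec by (simp add: decseq_SucI)
  have lb: "L \<le> s k" for k
  proof (rule LIMSEQ_le_const2[OF lim])
    show "\<exists>N. \<forall>n\<ge>N. (s \<circ> r) n \<le> s k"
      using d r by (metis comp_apply decseqD le_trans seq_suble)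
  qed
  obtain L' where L': "s \<longlonglongrightarrow> L'" using decseq_convergent[OF d, of L] lb by blast
  have "(s \<circ> r) \<longlonglongrightarrow> L'" using LIMSEQ_subseq_LIMSEQ[OF L' r] .
  then have "L = L'" using lim LIMSEQ_unique by blast
  then show ?thesis using lb L' by simp
qed

lemma par: fixes x y :: "'a::real_inner"
  shows "(norm ((1/2) *\<^sub>R (x + y)))\<^sup>2 = ((norm x)\<^sup>2 + (norm y)\<^sup>2) / 2 - (norm (x - y))\<^sup>2 / 4"
proof -
  have a: "(norm (x + y))\<^sup>2 = x \<bullet> x + 2 * (x \<bullet> y) + y \<bullet> y"
    unfolding power2_norm_eq_inner by (simp add: inner_add_left inner_add_right inner_commute[of y x])
  have b: "(norm ((1/2) *\<^sub>R (x + y)))\<^sup>2 = (norm (x + y))\<^sup>2 / 4"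
    by (simp add: power_mult_distrib power_divide)
  have c: "(norm (x - y))\<^sup>2 = x \<bullet> x - 2 * (x \<bullet> y) + y \<bullet> y"
    unfolding power2_norm_eq_inner by (simp add: inner_diff_left inner_diff_right inner_commute[of y x])
  show ?thesis unfolding b a c power2_norm_eq_inner[symmetric] by (simp add: field_simps)
qed

lemma unique_min:
  fixes F :: "nat \<Rightarrow> nat \<Rightarrow> 'a::euclidean_space \<Rightarrow> real"
  assumes J: "finite J" "J \<noteq> {}" and I: "finite I" "I \<noteq> {}"
    and aff: "\<And>j i t. F j i t = F j i 0 + G j i \<bullet> t"
  shows "\<exists>!t. \<forall>s. (MAX j\<in>J. MAX i\<in>I. F j i t) + (norm t)\<^sup>2 / 2
                 \<le> (MAX j\<in>J. MAX i\<in>I. F j i s) + (norm s)\<^sup>2 / 2"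
proof -
  define th where "th t = (MAX j\<in>J. MAX i\<in>I. F j i t)" for t
  define h where "h t = th t + (norm t)\<^sup>2 / 2" for t
  have thle: "F j i t \<le> th t" if "j \<in> J" "i \<in> I" for j i t
  proof -
    have "F j i t \<le> (MAX i\<in>I. F j i t)" by (rule le_MAX[of I i "\<lambda>i. F j i t", OF I(1) that(2)])
    also have "\<dots> \<le> th t" unfolding th_def by (rule le_MAX[of J j "\<lambda>j. MAX i\<in>I. F j i t", OF J(1) that(1)])
    finally show ?thesis .
  qed
  have contF: "continuous (at t) (F j i)" for j i t
    by (subst aff[abs_def]) (intro continuous_intros)
  have cth: "continuous (at t) th" for t
    unfolding th_def using J I contF by (intro continuous_MAX) auto
  have ch: "continuous_on UNIV h"
    unfolding h_def using cth by (intro continuous_at_imp_continuous_on continuous_intros) auto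
  obtain j0 i0 where ji0: "j0 \<in> J" "i0 \<in> I" using J I by blast
  define a where "a = F j0 i0 0"
  define b where "b = norm (G j0 i0)"
  define R where "R = 2 * b + 2 * \<bar>h 0 - a\<bar> + 2"
  have far: "h 0 \<le> h t" if "norm t \<ge> R" for t
  proof -
    have "- (b * norm t) \<le> G j0 i0 \<bullet> t"
      using Cauchy_Schwarz_ineq2[of "G j0 i0" t] unfolding b_def by (simp add: abs_le_iff)
    then have "a - b * norm t \<le> th t" using thle[OF ji0, of t] aff[of j0 i0 t] a_def by simp
    moreover have "b \<ge> 0" unfolding b_def by simp
    moreover have "norm t * (norm t / 2 - b) \<ge> norm t / 2 - b"
    proof -
      have Rb: "R \<ge> 2 * b + 2" unfolding R_def by simp
      have "1 \<le> norm t"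
        using that Rb \<open>b \<ge> 0\<close> by linarith
      have "0 \<le> norm t / 2 - b"
        using that Rb by linarith
      note this \<open>1 \<le> norm t\<close>
      then show ?thesis using mult_right_mono[of 1 "norm t" "norm t / 2 - b"] by simp
    qed
    moreover have "norm t / 2 - b \<ge> \<bar>h 0 - a\<bar> + 1" using that unfolding R_def by simp
    moreover have "norm t * (norm t / 2 - b) = (norm t)\<^sup>2 / 2 - b * norm t"
      by (simp add: power2_eq_square algebra_simps)
    moreover have "h 0 - a \<le> \<bar>h 0 - a\<bar>" by simp
    ultimately have "h 0 \<le> a - b * norm t + (norm t)\<^sup>2 / 2"
      by linarith
    then show ?thesis unfolding h_def using \<open>a - b * norm t \<le> th t\<close> by simp
  qed
  have R0: "R \<ge> 0" unfolding R_def b_def by simp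
  have cR: "compact (cball (0::'a) R)" by (rule compact_cball)
  have neR: "cball (0::'a) R \<noteq> {}" using R0 by simp
  have hR: "continuous_on (cball 0 R) h" by (rule continuous_on_subset[OF ch subset_UNIV])
  obtain t0 where t0: "t0 \<in> cball 0 R" "\<forall>y\<in>cball 0 R. h t0 \<le> h y"
    using continuous_attains_inf[OF cR neR hR] by blast
  have z: "0 \<in> cball (0::'a) R" using R0 by simp
  have minI: "h t0 \<le> h s" for s
  proof (cases "norm s \<le> R")
    case True
    then have "s \<in> cball 0 R" by simp
    then show ?thesis using t0(2) by blast
  next
    case False
    have "h t0 \<le> h 0" using t0(2) z by blast
    moreover have "h 0 \<le> h s" using far[of s] False by simp
    ultimately show ?thesis by linarith
  qed
  have uniq: "t1 = t2" if m1: "\<forall>s. h t1 \<le> h s" and m2: "\<forall>s. h t2 \<le> h s" for t1 t2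
  proof -
    define c where "c = (1/2) *\<^sub>R (t1 + t2)"
    have thc: "th c \<le> (th t1 + th t2) / 2"
      unfolding th_def[of c]
    proof (intro MAX_le J I)
      fix j i assume ji: "j \<in> J" "i \<in> I"
      have "F j i c = (F j i t1 + F j i t2) / 2"
        using aff[of j i c] aff[of j i t1] aff[of j i t2] unfolding c_def by (simp add: inner_add_right algebra_simps)
      also have "\<dots> \<le> (th t1 + th t2) / 2" using thle[OF ji] by (simp add: add_mono)
      finally show "F j i c \<le> (th t1 + th t2) / 2" .
    qed
    have nc: "(norm c)\<^sup>2 = ((norm t1)\<^sup>2 + (norm t2)\<^sup>2) / 2 - (norm (t1 - t2))\<^sup>2 / 4"
      unfolding c_def by (rule par)
    have hc: "h c = th c + (norm c)\<^sup>2 / 2" "h t1 = th t1 + (norm t1)\<^sup>2 / 2"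
      "h t2 = th t2 + (norm t2)\<^sup>2 / 2" by (simp_all only: h_def)
    have "h c \<le> (h t1 + h t2) / 2 - (norm (t1 - t2))\<^sup>2 / 8"
      using thc nc hc by argo
    moreover have "h t1 \<le> h c" "h t1 \<le> h t2" "h t2 \<le> h t1" using m1 m2 by auto
    ultimately have "(norm (t1 - t2))\<^sup>2 \<le> 0" by argo
    then show ?thesis by simp
  qed
  have e: "(MAX j\<in>J. MAX i\<in>I. F j i t) + (norm t)\<^sup>2 / 2 = h t" for t
    by (simp add: h_def th_def)
  show ?thesis unfolding e
  proof (rule ex1I[of _ t0])
    show "\<forall>s. h t0 \<le> h s" using minI by blast
  next
    fix t assume "\<forall>s. h t \<le> h s"
    then show "t = t0" using uniq[of t t0] minI by blast
  qed
qed


theorem lemma4p4: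
  fixes f :: "nat \<Rightarrow> real^'n \<Rightarrow> real^'k \<Rightarrow> real"
    and g :: "nat \<Rightarrow> nat \<Rightarrow> real^'n \<Rightarrow> real^'n"
    and xi :: "nat \<Rightarrow> real^'k"
    and m p :: nat
  assumes m: "m \<ge> 1" and p: "p \<ge> 1"
    and xi_inj: "inj_on xi {1..p}"
    and grad: "\<And>j i x. j \<in> {1..m} \<Longrightarrow> i \<in> {1..p} \<Longrightarrow>
                 ((\<lambda>y. f j y (xi i)) has_derivative (\<lambda>v. g j i x \<bullet> v)) (at x)"
    and grad_cont: "\<And>j i. j \<in> {1..m} \<Longrightarrow> i \<in> {1..p} \<Longrightarrow> continuous_on UNIV (g j i)"
  shows
   "(\<forall>X :: nat \<Rightarrow> real^'n.
       (\<forall>k. \<not> critical f g xi m p (X k)) \<and>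
       (\<forall>k. \<forall>j\<in>{1..m}. Phi f xi p j (X (Suc k)) \<le> Phi f xi p j (X k)) \<longrightarrow>
       (\<forall>xs. acc_point X xs \<longrightarrow>
          (\<forall>k. \<forall>j\<in>{1..m}. Phi f xi p j xs \<le> Phi f xi p j (X k)) \<and>
          (\<forall>j\<in>{1..m}. (\<lambda>k. Phi f xi p j (X k)) \<longlonglongrightarrow> Phi f xi p j xs)) \<and>
       (\<forall>a b. acc_point X a \<and> acc_point X b \<longrightarrow> (\<forall>j\<in>{1..m}. Phi f xi p j a = Phi f xi p j b)))
    \<and>
    (\<forall>(\<epsilon>::real) (\<beta>::real) (X :: nat \<Rightarrow> real^'n).
       \<epsilon> > 0 \<and> 0 < \<beta> \<and> \<beta> < 1 \<and> alg1_seq f g xi m p \<epsilon> \<beta> X \<and> (\<exists>a. acc_point X a) \<longrightarrow>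
       (\<forall>xs. acc_point X xs \<longrightarrow>
          (\<forall>k. \<forall>j\<in>{1..m}. Phi f xi p j xs \<le> Phi f xi p j (X k)) \<and>
          (\<forall>j\<in>{1..m}. (\<lambda>k. Phi f xi p j (X k)) \<longlonglongrightarrow> Phi f xi p j xs)) \<and>
       (\<forall>a b. acc_point X a \<and> acc_point X b \<longrightarrow> (\<forall>j\<in>{1..m}. Phi f xi p j a = Phi f xi p j b)))"
proof -
  have Phi_eq: "Phi f xi p j = (\<lambda>x. MAX i\<in>{1..p}. f j x (xi i))" for j
    by (rule ext) (simp add: Phi_def)
  have contPhi: "continuous (at x) (Phi f xi p j)" if "j \<in> {1..m}" for j x
    unfolding Phi_eq using p that
    by (intro continuous_MAX) (auto intro: has_derivative_continuous[OF grad])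
  have partI: "(\<forall>xs. acc_point X xs \<longrightarrow>
          (\<forall>k. \<forall>j\<in>{1..m}. Phi f xi p j xs \<le> Phi f xi p j (X k)) \<and>
          (\<forall>j\<in>{1..m}. (\<lambda>k. Phi f xi p j (X k)) \<longlonglongrightarrow> Phi f xi p j xs)) \<and>
       (\<forall>a b. acc_point X a \<and> acc_point X b \<longrightarrow> (\<forall>j\<in>{1..m}. Phi f xi p j a = Phi f xi p j b))"
    if dec: "\<forall>k. \<forall>j\<in>{1..m}. Phi f xi p j (X (Suc k)) \<le> Phi f xi p j (X k)"
    for X :: "nat \<Rightarrow> real^'n"
  proof -
    have key: "(\<forall>k. Phi f xi p j xs \<le> Phi f xi p j (X k)) \<and>
               (\<lambda>k. Phi f xi p j (X k)) \<longlonglongrightarrow> Phi f xi p j xs"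
      if acc: "acc_point X xs" and j: "j \<in> {1..m}" for xs j
    proof -
      obtain r where r: "strict_mono r" "(X \<circ> r) \<longlonglongrightarrow> xs" using acc unfolding acc_point_def by blast
      have "((\<lambda>n. Phi f xi p j ((X \<circ> r) n)) \<longlongrightarrow> Phi f xi p j xs) sequentially"
        using isCont_tendsto_compose[OF contPhi[OF j] r(2)] .
      then have "((\<lambda>k. Phi f xi p j (X k)) \<circ> r) \<longlonglongrightarrow> Phi f xi p j xs"
        by (simp add: comp_def)
      then show ?thesis using decr_sub[of "\<lambda>k. Phi f xi p j (X k)" r] dec j r(1) by blast
    qed
    show ?thesis
    proof (intro conjI allI impI ballI)
      fix xs k j assume "acc_point X xs" "j \<in> {1..m}"
      then show "Phi f xi p j xs \<le> Phi f xi p j (X k)" using key by blast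
    next
      fix xs j assume "acc_point X xs" "j \<in> {1..m}"
      then show "(\<lambda>k. Phi f xi p j (X k)) \<longlonglongrightarrow> Phi f xi p j xs" using key by blast
    next
      fix a b j assume ab: "acc_point X a \<and> acc_point X b" and j: "j \<in> {1..m}"
      then show "Phi f xi p j a = Phi f xi p j b"
        using key[of a j] key[of b j] LIMSEQ_unique by blast
    qed
  qed
  have mono: "Phi f xi p j (X (Suc k)) \<le> Phi f xi p j (X k)"
    if alg: "alg1_seq f g xi m p \<epsilon> \<beta> X" and b: "0 < \<beta>" and j: "j \<in> {1..m}"
    for \<epsilon> \<beta> X k j
  proof -
    define x where "x = X k"
    define t where "t = tdir f g xi m p x"
    obtain a r where ar: "r \<ge> 1" "a = 1 / 2 ^ r" "armijo f g xi m p \<beta> x t a"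
        "X (Suc k) = x + a *\<^sub>R t"
    proof -
      from alg have "\<exists>a. (\<exists>r::nat. r \<ge> 1 \<and> a = 1 / 2 ^ r) \<and>
             armijo f g xi m p \<beta> (X k) (tdir f g xi m p (X k)) a \<and>
             X (Suc k) = X k + a *\<^sub>R tdir f g xi m p (X k)"
        unfolding alg1_seq_def by meson
      then show ?thesis using that unfolding x_def t_def by blast
    qed
    have ex1: "\<exists>!t. \<forall>s. theta_fun f g xi m p x t + (norm t)\<^sup>2 / 2
                 \<le> theta_fun f g xi m p x s + (norm s)\<^sup>2 / 2"
      unfolding theta_fun_def
      by (rule unique_min[of "{1..m}" "{1..p}"
            "\<lambda>j i t. f j x (xi i) + g j i x \<bullet> t - Phi f xi p j x" "\<lambda>j i. g j i x"])
        (use m p in auto)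
    have P: "\<forall>s. theta_fun f g xi m p x t + (norm t)\<^sup>2 / 2
                 \<le> theta_fun f g xi m p x s + (norm s)\<^sup>2 / 2"
      unfolding t_def tdir_def by (rule theI'[OF ex1])
    have th0: "theta_fun f g xi m p x 0 \<le> 0"
      unfolding theta_fun_def
    proof (intro MAX_le)
      fix j i assume "j \<in> {1..m}" "i \<in> {1..p}"
      then show "f j x (xi i) + g j i x \<bullet> 0 - Phi f xi p j x \<le> 0"
        unfolding Phi_def by (simp add: le_MAX)
    qed (use m p in auto)
    have tht: "theta_fun f g xi m p x t \<le> 0"
      proof -
      have "0 \<le> (norm t)\<^sup>2 / 2" by simp
      moreover have "theta_fun f g xi m p x t + (norm t)\<^sup>2 / 2 \<le> theta_fun f g xi m p x 0"
        using P[rule_format, of 0] by simp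
      ultimately show ?thesis using th0 by linarith
    qed
    have inner: "(MAX i\<in>{1..p}. f j x (xi i) + g j i x \<bullet> t) - Phi f xi p j x \<le> 0"
    proof -
      have "(MAX i\<in>{1..p}. f j x (xi i) + g j i x \<bullet> t) \<le> Phi f xi p j x"
      proof (intro MAX_le)
        fix i assume i: "i \<in> {1..p}"
        have "f j x (xi i) + g j i x \<bullet> t - Phi f xi p j x
              \<le> (MAX i\<in>{1..p}. f j x (xi i) + g j i x \<bullet> t - Phi f xi p j x)"
          using i by (intro le_MAX) auto
        also have "\<dots> \<le> theta_fun f g xi m p x t"
          unfolding theta_fun_def using j by (intro le_MAX[where h="\<lambda>j. MAX i\<in>{1..p}. f j x (xi i) + g j i x \<bullet> t - Phi f xi p j x"]) auto
        finally show "f j x (xi i) + g j i x \<bullet> t \<le> Phi f xi p j x" using tht by simp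
      qed (use p in auto)
      then show ?thesis by simp
    qed
    have "a > 0" using ar by simp
    then have "a * \<beta> * ((MAX i\<in>{1..p}. f j x (xi i) + g j i x \<bullet> t) - Phi f xi p j x) \<le> 0"
      using b inner by (intro mult_nonneg_nonpos) auto
    moreover have "Phi f xi p j (x + a *\<^sub>R t) \<le>
        Phi f xi p j x + a * \<beta> * ((MAX i\<in>{1..p}. f j x (xi i) + g j i x \<bullet> t) - Phi f xi p j x)"
      using ar(3) j unfolding armijo_def by blast
    ultimately show ?thesis using ar(4) unfolding x_def by simp
  qed
  show ?thesis
  proof (rule conjI; intro allI impI)
    fix X :: "nat \<Rightarrow> real^'n"
    assume "(\<forall>k. \<not> critical f g xi m p (X k)) \<and>
       (\<forall>k. \<forall>j\<in>{1..m}. Phi f xi p j (X (Suc k)) \<le> Phi f xi p j (X k))"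
    then show "(\<forall>xs. acc_point X xs \<longrightarrow>
          (\<forall>k. \<forall>j\<in>{1..m}. Phi f xi p j xs \<le> Phi f xi p j (X k)) \<and>
          (\<forall>j\<in>{1..m}. (\<lambda>k. Phi f xi p j (X k)) \<longlonglongrightarrow> Phi f xi p j xs)) \<and>
       (\<forall>a b. acc_point X a \<and> acc_point X b \<longrightarrow> (\<forall>j\<in>{1..m}. Phi f xi p j a = Phi f xi p j b))"
      using partI by blast
  next
    fix \<epsilon> \<beta> :: real and X :: "nat \<Rightarrow> real^'n"
    assume H: "\<epsilon> > 0 \<and> 0 < \<beta> \<and> \<beta> < 1 \<and> alg1_seq f g xi m p \<epsilon> \<beta> X \<and> (\<exists>a. acc_point X a)"
    then have "\<forall>k. \<forall>j\<in>{1..m}. Phi f xi p j (X (Suc k)) \<le> Phi f xi p j (X k)"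
      using mono by blast
    from partI[OF this]
    show "(\<forall>xs. acc_point X xs \<longrightarrow>
          (\<forall>k. \<forall>j\<in>{1..m}. Phi f xi p j xs \<le> Phi f xi p j (X k)) \<and>
          (\<forall>j\<in>{1..m}. (\<lambda>k. Phi f xi p j (X k)) \<longlonglongrightarrow> Phi f xi p j xs)) \<and>
       (\<forall>a b. acc_point X a \<and> acc_point X b \<longrightarrow> (\<forall>j\<in>{1..m}. Phi f xi p j a = Phi f xi p j b))" .
  qed
qed

end
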